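(* If a typing environment $\Gamma$ is live and $\Gamma\to\Gamma'$, then $\Gamma'$ is live.
   Context: Sorts: $\mathsf{S} ::= \mathtt{nat} \mid \mathtt{int} \mid \mathtt{bool} \mid \mathtt{unit}$; subsorting $\leq:$ is the least reflexive relation on sorts with $\mathtt{nat}\leq:\mathtt{int}$. Session types: $\mathbb{T} ::= \&_{i\in I}\mathsf{p}?\ell_i(\mathsf{S}_i).\mathbb{T}_i \mid \oplus_{i\in I}\mathsf{p}!\ell_i(\mathsf{S}_i).\mathbb{T}_i \mid \mathtt{end} \mid \mu\mathbf{t}.\mathbb{T} \mid \mathbf{t}$ ($I$ finite nonempty, distinct labels, guarded recursion, closed types); $\equiv$ on types is the least congruence with $\mu\mathbf{t}.\mathbb{T}\equiv\mathbb{T}\{\mu\mathbf{t}.\mathbb{T}/\mathbf{t}\}$. Queue types $\sigma ::= \epsilon \mid \mathsf{p}!\ell(\mathsf{S}) \mid \sigma\cdot\sigma$, with $\equiv$ the least congruence making $\cdot$ associative with unit $\epsilon$ and swapping adjacent messages $\mathsf{p}_1!\ell_1(\mathsf{S}_1)\cdot\mathsf{p}_2!\ell_2(\mathsf{S}_2)$ when $\mathsf{p}_1\neq\mathsf{p}_2$. A typing environment $\Gamma$ is a finite map from participants to pairs $(\sigma,\mathbb{T})$. $(\sigma_1,\mathbb{T}_1)\equiv(\sigma_2,\mathbb{T}_2)$ iff both components are $\equiv$; $\Gamma\equiv\Gamma'$ iff entries of common participants are $\equiv$ and entries of participants in only one domain are $\equiv(\epsilon,\mathtt{end})$. Reductions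 $\Gamma\xrightarrow{\alpha}\Gamma'$: (e-rcv) $\mathsf{p}{:}(\mathsf{q}!\ell_k(\mathsf{S}'_k)\cdot\sigma,\mathbb{T}_\mathsf{p}),\mathsf{q}{:}(\sigma_\mathsf{q},\&_{i\in I}\mathsf{p}?\ell_i(\mathsf{S}_i).\mathbb{T}_i),\Gamma\xrightarrow{\mathsf{q}:\mathsf{p}?\ell_k}\mathsf{p}{:}(\sigma,\mathbb{T}_\mathsf{p}),\mathsf{q}{:}(\sigma_\mathsf{q},\mathbb{T}_k),\Gamma$ if $k\in I$ and $\mathsf{S}'_k\leq:\mathsf{S}_k$; (e-send) $\mathsf{p}{:}(\sigma,\oplus_{i\in I}\mathsf{q}!\ell_i(\mathsf{S}_i).\mathbb{T}_i),\Gamma\xrightarrow{\mathsf{p}:\mathsf{q}!\ell_k}\mathsf{p}{:}(\sigma\cdot\mathsf{q}!\ell_k(\mathsf{S}_k),\mathbb{T}_k),\Gamma$ if $k\in I$; (e-struct) $\Gamma\equiv\Gamma_1\xrightarrow{\alpha}\Gamma_1'\equiv\Gamma'$ implies $\Gamma\xrightarrow{\alpha}\Gamma'$. $\Gamma\to\Gamma'$ means $\Gamma\xrightarrow{\alpha}\Gamma'$ for some $\alpha$. A path is a finite or infinite sequence $(\Gamma_i)_{i\in I}$ ($I=\{0,1,\dots\}$ consecutive naturals) with $\Gamma_i\to\Gamma_{i+1}$ whenever $i+1\in I$. Fair: for all $i\in I$, (F1) if $\Gamma_i\xrightarrow{\mathsf{p}:\mathsf{q}!\ell}\Gamma'$ for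 some $\Gamma'$ then $\Gamma_k\xrightarrow{\mathsf{p}:\mathsf{q}!\ell'}\Gamma_{k+1}$ for some $k\geq i$ with $k+1\in I$ and some $\ell'$; (F2) if $\Gamma_i\xrightarrow{\mathsf{p}:\mathsf{q}?\ell}\Gamma'$ for some $\Gamma'$ then $\Gamma_k\xrightarrow{\mathsf{p}:\mathsf{q}?\ell}\Gamma_{k+1}$ for some $k\geq i$ with $k+1\in I$. Live: for all $i\in I$, (L1) if $\Gamma_i(\mathsf{p})\equiv(\mathsf{q}!\ell(\mathsf{S})\cdot\sigma,\mathbb{T})$ then $\Gamma_k\xrightarrow{\mathsf{q}:\mathsf{p}?\ell}\Gamma_{k+1}$ for some $k\geq i$ with $k+1\in I$; (L2) if $\Gamma_i(\mathsf{p})\equiv(\sigma_\mathsf{p},\&_{j\in J}\mathsf{q}?\ell_j(\mathsf{S}_j).\mathbb{T}_j)$ then $\Gamma_k\xrightarrow{\mathsf{p}:\mathsf{q}?\ell'}\Gamma_{k+1}$ for some $k\geq i$ with $k+1\in I$ and some $\ell'$. $\Gamma$ is live iff every fair path with $\Gamma_0=\Gamma$ is live. *)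

theory Defs
  imports Main "HOL-Library.Finite_Map" "HOL-Library.Extended_Nat"
begin

datatype sort = SNat | SInt | SBool | SUnit

definition subsort :: "sort \<Rightarrow> sort \<Rightarrow> bool" where
  "subsort S S' \<longleftrightarrow> S = S' \<or> (S = SNat \<and> S' = SInt)"

section \<open>Session types (recursion variables as de Bruijn indices)\<close>

text \<open>Branching/selection is a finite map from labels to (sort, continuation);
  this makes labels distinct and ignores the order of the index set I.\<close>

datatype ('p, 'l) stype =
    Bra 'p "('l, sort \<times> ('p, 'l) stype) fmap"   (* &_{i} p?l_i(S_i).T_i *)
  | Sel 'p "('l, sort \<times> ('p, 'l) stype) fmap"   (* (+)_{i} p!l_i(S_i).T_i *)
  | End
  | Mu "('p, 'l) stype"
  | TVar nat

primrec lift :: "nat \<Rightarrow> ('p, 'l) stype \<Rightarrow> ('p, 'l) stype" where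
  "lift k (Bra p m) = Bra p (fmmap (map_prod id (lift k)) m)"
| "lift k (Sel p m) = Sel p (fmmap (map_prod id (lift k)) m)"
| "lift k End = End"
| "lift k (Mu T) = Mu (lift (Suc k) T)"
| "lift k (TVar n) = (if n < k then TVar n else TVar (Suc n))"

primrec subst :: "nat \<Rightarrow> ('p, 'l) stype \<Rightarrow> ('p, 'l) stype \<Rightarrow> ('p, 'l) stype" where
  "subst k U (Bra p m) = Bra p (fmmap (map_prod id (subst k U)) m)"
| "subst k U (Sel p m) = Sel p (fmmap (map_prod id (subst k U)) m)"
| "subst k U End = End"
| "subst k U (Mu T) = Mu (subst (Suc k) (lift 0 U) T)"
| "subst k U (TVar n) = (if n = k then U else if k < n then TVar (n - 1) else TVar n)"

primrec unguarded :: "('p, 'l) stype \<Rightarrow> nat set" where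
  "unguarded (Bra p m) = {}"
| "unguarded (Sel p m) = {}"
| "unguarded End = {}"
| "unguarded (Mu T) = {n. Suc n \<in> unguarded T}"
| "unguarded (TVar n) = {n}"

inductive wf_type :: "nat \<Rightarrow> ('p, 'l) stype \<Rightarrow> bool" where
  wf_bra: "fmdom' m \<noteq> {} \<Longrightarrow> (\<forall>x\<in>fmran' m. wf_type k (snd x)) \<Longrightarrow> wf_type k (Bra p m)"
| wf_sel: "fmdom' m \<noteq> {} \<Longrightarrow> (\<forall>x\<in>fmran' m. wf_type k (snd x)) \<Longrightarrow> wf_type k (Sel p m)"
| wf_end: "wf_type k End"
| wf_mu: "0 \<notin> unguarded T \<Longrightarrow> wf_type (Suc k) T \<Longrightarrow> wf_type k (Mu T)"
| wf_var: "n < k \<Longrightarrow> wf_type k (TVar n)"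

abbreviation session_type :: "('p, 'l) stype \<Rightarrow> bool" where
  "session_type T \<equiv> wf_type 0 T"

inductive teq :: "('p, 'l) stype \<Rightarrow> ('p, 'l) stype \<Rightarrow> bool" where
  teq_refl: "teq T T"
| teq_sym: "teq T U \<Longrightarrow> teq U T"
| teq_trans: "teq T U \<Longrightarrow> teq U V \<Longrightarrow> teq T V"
| teq_unfold: "teq (Mu T) (subst 0 (Mu T) T)"
| teq_mu: "teq T U \<Longrightarrow> teq (Mu T) (Mu U)"
| teq_bra: "fmdom' m = fmdom' m' \<Longrightarrow>
    (\<forall>l S T S' T'. fmlookup m l = Some (S, T) \<longrightarrow> fmlookup m' l = Some (S', T') \<longrightarrow> S = S' \<and> teq T T')
    \<Longrightarrow> teq (Bra p m) (Bra p m')"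
| teq_sel: "fmdom' m = fmdom' m' \<Longrightarrow>
    (\<forall>l S T S' T'. fmlookup m l = Some (S, T) \<longrightarrow> fmlookup m' l = Some (S', T') \<longrightarrow> S = S' \<and> teq T T')
    \<Longrightarrow> teq (Sel p m) (Sel p m')"

text \<open>A queue type is a list of messages (recipient, label, sort); the empty list is
  epsilon and concatenation is append (so associativity/unit hold definitionally).\<close>
type_synonym ('p, 'l) queue = "('p \<times> 'l \<times> sort) list"

inductive qeq :: "('p, 'l) queue \<Rightarrow> ('p, 'l) queue \<Rightarrow> bool" where
  qeq_refl: "qeq s s"
| qeq_sym: "qeq s t \<Longrightarrow> qeq t s"
| qeq_trans: "qeq s t \<Longrightarrow> qeq t u \<Longrightarrow> qeq s u"
| qeq_swap: "fst m1 \<noteq> fst m2 \<Longrightarrow> qeq (xs @ [m1, m2] @ ys) (xs @ [m2, m1] @ ys)"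

type_synonym ('p, 'l) entry = "('p, 'l) queue \<times> ('p, 'l) stype"
type_synonym ('p, 'l) env = "('p, ('p, 'l) entry) fmap"

definition eeq :: "('p, 'l) entry \<Rightarrow> ('p, 'l) entry \<Rightarrow> bool" where
  "eeq e e' \<longleftrightarrow> qeq (fst e) (fst e') \<and> teq (snd e) (snd e')"

definition envequiv :: "('p, 'l) env \<Rightarrow> ('p, 'l) env \<Rightarrow> bool" where
  "envequiv G G' \<longleftrightarrow> (\<forall>p. case (fmlookup G p, fmlookup G' p) of
      (Some e, Some e') \<Rightarrow> eeq e e'
    | (Some e, None) \<Rightarrow> eeq e ([], End)
    | (None, Some e') \<Rightarrow> eeq e' ([], End)
    | (None, None) \<Rightarrow> True)"

definition wf_env :: "('p, 'l) env \<Rightarrow> bool" where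
  "wf_env G \<longleftrightarrow> (\<forall>e\<in>fmran' G. session_type (snd e))"

datatype ('p, 'l) act =
    ARcv 'p 'p 'l   (* ARcv q p l  =  q:p?l *)
  | ASnd 'p 'p 'l   (* ASnd p q l  =  p:q!l *)

inductive red :: "('p, 'l) env \<Rightarrow> ('p, 'l) act \<Rightarrow> ('p, 'l) env \<Rightarrow> bool" where
  e_rcv: "\<lbrakk> wf_env G; p \<noteq> q;
            fmlookup G p = Some ((q, l, S') # \<sigma>, Tp);
            fmlookup G q = Some (\<sigma>q, Bra p m);
            fmlookup m l = Some (S, T); subsort S' S \<rbrakk>
     \<Longrightarrow> red G (ARcv q p l) (fmupd q (\<sigma>q, T) (fmupd p (\<sigma>, Tp) G))"
| e_send: "\<lbrakk> wf_env G; fmlookup G p = Some (\<sigma>, Sel q m); fmlookup m l = Some (S, T) \<rbrakk>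
     \<Longrightarrow> red G (ASnd p q l) (fmupd p (\<sigma> @ [(q, l, S)], T) G)"
| e_struct: "\<lbrakk> wf_env G; wf_env G'; envequiv G G1; red G1 a G1'; envequiv G1' G' \<rbrakk>
     \<Longrightarrow> red G a G'"

definition red_any :: "('p, 'l) env \<Rightarrow> ('p, 'l) env \<Rightarrow> bool" where
  "red_any G G' \<longleftrightarrow> (\<exists>a. red G a G')"

text \<open>A path is a sequence Gs indexed by {i. enat i < n}, with n \<in> {1,2,...,\<infinity>}.\<close>
definition is_path :: "(nat \<Rightarrow> ('p, 'l) env) \<Rightarrow> enat \<Rightarrow> bool" where
  "is_path Gs n \<longleftrightarrow> n \<noteq> 0 \<and> (\<forall>i. enat (Suc i) < n \<longrightarrow> red_any (Gs i) (Gs (Suc i)))"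

definition fair_path :: "(nat \<Rightarrow> ('p, 'l) env) \<Rightarrow> enat \<Rightarrow> bool" where
  "fair_path Gs n \<longleftrightarrow> (\<forall>i. enat i < n \<longrightarrow>
     (\<forall>p q l G'. red (Gs i) (ASnd p q l) G' \<longrightarrow>
        (\<exists>k\<ge>i. enat (Suc k) < n \<and> (\<exists>l'. red (Gs k) (ASnd p q l') (Gs (Suc k))))) \<and>
     (\<forall>p q l G'. red (Gs i) (ARcv p q l) G' \<longrightarrow>
        (\<exists>k\<ge>i. enat (Suc k) < n \<and> red (Gs k) (ARcv p q l) (Gs (Suc k)))))"

definition live_path :: "(nat \<Rightarrow> ('p, 'l) env) \<Rightarrow> enat \<Rightarrow> bool" where
  "live_path Gs n \<longleftrightarrow> (\<forall>i. enat i < n \<longrightarrow>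
     (\<forall>p q l S \<sigma> T e. fmlookup (Gs i) p = Some e \<longrightarrow> eeq e ((q, l, S) # \<sigma>, T) \<longrightarrow>
        (\<exists>k\<ge>i. enat (Suc k) < n \<and> red (Gs k) (ARcv q p l) (Gs (Suc k)))) \<and>
     (\<forall>p q \<sigma> m e. fmlookup (Gs i) p = Some e \<longrightarrow> eeq e (\<sigma>, Bra q m) \<longrightarrow> fmdom' m \<noteq> {} \<longrightarrow>
        (\<exists>k\<ge>i. enat (Suc k) < n \<and> (\<exists>l'. red (Gs k) (ARcv p q l') (Gs (Suc k))))))"

definition live :: "('p, 'l) env \<Rightarrow> bool" where
  "live G \<longleftrightarrow> (\<forall>Gs n. is_path Gs n \<longrightarrow> Gs 0 = G \<longrightarrow> fair_path Gs n \<longrightarrow> live_path Gs n)"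

end

theory Submission
  imports Defs
begin


datatype 'p head = HSel 'p | HBra 'p | HEnd | HBot

definition shift :: "'a \<Rightarrow> (nat \<Rightarrow> 'a) \<Rightarrow> nat \<Rightarrow> 'a" where
  "shift x r n = (case n of 0 \<Rightarrow> x | Suc k \<Rightarrow> r k)"

primrec hh :: "(nat \<Rightarrow> 'p head) \<Rightarrow> ('p,'l) stype \<Rightarrow> 'p head" where
  "hh r (Bra p m) = HBra p"
| "hh r (Sel p m) = HSel p"
| "hh r End = HEnd"
| "hh r (Mu T) = hh (shift HBot r) T"
| "hh r (TVar n) = r n"

lemma hd_lift: "hh r (lift k U) = hh (\<lambda>n. if n < k then r n else r (Suc n)) U"
proof (induction U arbitrary: k r)
  case (Mu U)
  have "shift HBot (\<lambda>n. if n < k then r n else r (Suc n)) =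
        (\<lambda>n. if n < Suc k then shift HBot r n else shift HBot r (Suc n))"
    by (auto simp: shift_def split: nat.splits)
  then show ?case using Mu by simp
qed auto

lemma hd_subst: "hh r (subst k U T) =
   hh (\<lambda>n. if n < k then r n else if n = k then hh r U else r (n - 1)) T"
proof (induction T arbitrary: k U r)
  case (Mu T)
  have l: "hh (shift HBot r) (lift 0 U) = hh r U"
    by (simp add: hd_lift shift_def)
  have "(\<lambda>n. if n < Suc k then shift HBot r n else if n = Suc k then hh r U else shift HBot r (n - 1))
      = shift HBot (\<lambda>n. if n < k then r n else if n = k then hh r U else r (n - 1))"
    by (auto simp: shift_def split: nat.splits)
  note fe = this
  have "hh r (subst k U (Mu T)) = hh (shift HBot r) (subst (Suc k) (lift 0 U) T)" by simp
  also have "... = hh (\<lambda>n. if n < Suc k then shift HBot r n else if n = Suc k then hh (shift HBot r) (lift 0 U) else shift HBot r (n - 1)) T" by (rule Mu.IH)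
  also have "... = hh (\<lambda>n. if n < Suc k then shift HBot r n else if n = Suc k then hh r U else shift HBot r (n - 1)) T" by (simp only: l)
  also have "... = hh (shift HBot (\<lambda>n. if n < k then r n else if n = k then hh r U else r (n - 1))) T" by (simp only: fe)
  finally show ?case by simp
qed auto

lemma hd_upd: "(\<forall>x. hh (r(k:=x)) T = x) \<or> (\<forall>x. hh (r(k:=x)) T = hh r T)"
proof (induction T arbitrary: k r)
  case (Mu T)
  have e: "\<And>x. shift HBot (r(k:=x)) = (shift HBot r)(Suc k := x)"
    by (auto simp: shift_def split: nat.splits)
  show ?case using Mu.IH[where k="Suc k" and r="shift HBot r"] by (simp only: hh.simps e)
qed auto

lemma hd_unfold: "hh r (subst 0 (Mu T) T) = hh r (Mu T)"
proof -
  let ?r = "shift HBot r"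
  let ?y = "hh ?r T"
  have e: "(\<lambda>n. if n < 0 then r n else if n = 0 then hh r (Mu T) else r (n - 1)) = ?r(0 := ?y)"
    by (auto simp: shift_def split: nat.splits)
  have r0: "?r(0:=HBot) = ?r" by (auto simp: shift_def split: nat.splits)
  from hd_upd[of ?r 0 T] have "hh (?r(0 := ?y)) T = ?y"
    by (metis r0)
  then have "hh (\<lambda>n. if n < 0 then r n else if n = 0 then hh r (Mu T) else r (n - 1)) T = ?y"
    by (simp only: e)
  then show ?thesis by (simp only: hd_subst) simp
qed

lemma teq_hd: "teq T U \<Longrightarrow> hh r T = hh r U"
proof (induction arbitrary: r rule: teq.induct)
  case (teq_unfold T) then show ?case using hd_unfold by metis
qed auto

lemma teq_Sel_Sel: "teq T (Sel q m) \<Longrightarrow> teq T (Sel q' m') \<Longrightarrow> q = q'"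
  using teq_hd[of T "Sel q m" "\<lambda>_. HBot"] teq_hd[of T "Sel q' m'" "\<lambda>_. HBot"] by simp
lemma teq_Bra_Bra: "teq T (Bra q m) \<Longrightarrow> teq T (Bra q' m') \<Longrightarrow> q = q'"
  using teq_hd[of T "Bra q m" "\<lambda>_. HBot"] teq_hd[of T "Bra q' m'" "\<lambda>_. HBot"] by simp
lemma teq_Sel_Bra: "teq T (Sel q m) \<Longrightarrow> teq T (Bra q' m') \<Longrightarrow> False"
  using teq_hd[of T "Sel q m" "\<lambda>_. HBot"] teq_hd[of T "Bra q' m'" "\<lambda>_. HBot"] by simp

lemma qeq_filter: "qeq s t \<Longrightarrow> filter (\<lambda>x. fst x = r) s = filter (\<lambda>x. fst x = r) t"
  by (induction rule: qeq.induct) auto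

lemma qeq_app: "qeq s t \<Longrightarrow> qeq (s @ c) (t @ c)"
proof (induction rule: qeq.induct)
  case (qeq_swap m1 m2 xs ys)
  then show ?case using qeq.qeq_swap[of m1 m2 xs "ys @ c"] by simp
qed (auto intro: qeq.intros)

lemma qeq_pre: "qeq s t \<Longrightarrow> qeq (c @ s) (c @ t)"
proof (induction rule: qeq.induct)
  case (qeq_swap m1 m2 xs ys)
  then show ?case using qeq.qeq_swap[of m1 m2 "c @ xs" ys] by simp
qed (auto intro: qeq.intros)

lemma qeq_move: "(\<forall>x\<in>set xs. fst x \<noteq> fst m) \<Longrightarrow> qeq (xs @ m # ys) (m # xs @ ys)"
proof (induction xs)
  case Nil then show ?case by (simp add: qeq_refl)
next
  case (Cons a xs)
  then have 1: "qeq (a # xs @ m # ys) (a # m # xs @ ys)" using qeq_pre[of _ _ "[a]"] by simp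
  have "qeq ([] @ [a, m] @ (xs @ ys)) ([] @ [m, a] @ (xs @ ys))"
    using Cons.prems by (intro qeq_swap) auto
  then show ?case using 1 qeq_trans by simp blast
qed



definition ent :: "('p,'l) env \<Rightarrow> 'p \<Rightarrow> ('p,'l) entry" where
  "ent G p = (case fmlookup G p of None \<Rightarrow> ([], End) | Some e \<Rightarrow> e)"

lemma ent_upd: "ent (fmupd p e G) r = (if r = p then e else ent G r)"
  by (simp add: ent_def)

lemma eeq_refl: "eeq e e" by (simp add: eeq_def qeq_refl teq_refl)
lemma eeq_sym: "eeq a b \<Longrightarrow> eeq b a" by (auto simp: eeq_def intro: qeq_sym teq_sym)
lemma eeq_trans: "eeq a b \<Longrightarrow> eeq b c \<Longrightarrow> eeq a c" by (auto simp: eeq_def intro: qeq_trans teq_trans)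

lemma envequiv_ent: "envequiv G G' \<longleftrightarrow> (\<forall>p. eeq (ent G p) (ent G' p))"
  unfolding envequiv_def ent_def
  apply (rule iff_allI)
  subgoal for p by (cases "fmlookup G p"; cases "fmlookup G' p") (simp_all add: eeq_refl, (metis eeq_sym)+)
  done

lemma wf_env_iff: "wf_env G \<longleftrightarrow> (\<forall>p e. fmlookup G p = Some e \<longrightarrow> session_type (snd e))"
  unfolding wf_env_def by (meson fmran'I fmran'E)

lemma wf_env_ent: "wf_env G \<Longrightarrow> session_type (snd (ent G p))"
  by (auto simp: wf_env_iff ent_def split: option.splits intro: wf_end)

lemma wf_env_upd: "wf_env G \<Longrightarrow> session_type T \<Longrightarrow> wf_env (fmupd p (\<sigma>, T) G)"
  by (auto simp: wf_env_iff)

inductive_cases wfSel: "wf_type k (Sel p m)"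
inductive_cases wfBra: "wf_type k (Bra p m)"

lemma wf_cont_Sel: "wf_type k (Sel q m) \<Longrightarrow> fmlookup m l = Some (S, T) \<Longrightarrow> wf_type k T"
  by (erule wfSel) (force dest: fmran'I)
lemma wf_cont_Bra: "wf_type k (Bra q m) \<Longrightarrow> fmlookup m l = Some (S, T) \<Longrightarrow> wf_type k T"
  by (erule wfBra) (force dest: fmran'I)

lemma red_wf: "red G a G' \<Longrightarrow> wf_env G \<and> wf_env G'"
proof (induction rule: red.induct)
  case (e_rcv G p q l S' \<sigma> Tp \<sigma>q m S T)
  have "session_type Tp" using e_rcv by (force simp: wf_env_iff)
  moreover have "session_type (Bra p m)" using e_rcv by (force simp: wf_env_iff)
  then have "session_type T" using e_rcv wf_cont_Bra by metis
  ultimately show ?case using e_rcv by (simp add: wf_env_upd)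
next
  case (e_send G p \<sigma> q m l S T)
  have "session_type (Sel q m)" using e_send by (force simp: wf_env_iff)
  then have "session_type T" using e_send wf_cont_Sel by metis
  then show ?case using e_send by (simp add: wf_env_upd)
qed simp



lemma red_send_inv: "red G a G' \<Longrightarrow> a = ASnd p q l \<Longrightarrow>
  \<exists>m S T. teq (snd (ent G p)) (Sel q m) \<and> session_type (Sel q m) \<and> fmlookup m l = Some (S, T)
   \<and> eeq (ent G' p) (fst (ent G p) @ [(q, l, S)], T) \<and> (\<forall>r. r \<noteq> p \<longrightarrow> eeq (ent G' r) (ent G r))"
proof (induction arbitrary: p q l rule: red.induct)
  case (e_send G p' \<sigma> q' m l' S T)
  then have eqs: "p' = p" "q' = q" "l' = l" by auto
  have en: "ent G p = (\<sigma>, Sel q m)" using e_send eqs by (simp add: ent_def)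
  have "fmlookup G p = Some (\<sigma>, Sel q m)" using e_send eqs by simp
  then have wf: "session_type (Sel q m)" using e_send(1) wf_env_iff by (metis snd_conv)
  show ?case
    apply (rule exI[of _ m], rule exI[of _ S], rule exI[of _ T])
    using e_send eqs en wf by (simp add: ent_upd eeq_refl teq_refl)
next
  case (e_struct G G' G1 a G1')
  from e_struct.IH[OF e_struct.prems] obtain m S T where
    h: "teq (snd (ent G1 p)) (Sel q m)" "session_type (Sel q m)" "fmlookup m l = Some (S, T)"
     "eeq (ent G1' p) (fst (ent G1 p) @ [(q, l, S)], T)" "\<forall>r. r \<noteq> p \<longrightarrow> eeq (ent G1' r) (ent G1 r)"
    by blast
  have e1: "\<And>r. eeq (ent G r) (ent G1 r)" and e2: "\<And>r. eeq (ent G1' r) (ent G' r)"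
    using \<open>envequiv G G1\<close> \<open>envequiv G1' G'\<close> by (simp_all add: envequiv_ent)
  have "teq (snd (ent G p)) (Sel q m)" using e1[of p] h(1) by (metis eeq_def teq_trans)
  moreover have "eeq (ent G' p) (fst (ent G p) @ [(q, l, S)], T)"
  proof -
    have "qeq (fst (ent G1 p)) (fst (ent G p))" using e1[of p] by (metis eeq_def qeq_sym)
    then have "qeq (fst (ent G1 p) @ [(q, l, S)]) (fst (ent G p) @ [(q, l, S)])"
      by (rule qeq_app)
    then have "eeq (fst (ent G1 p) @ [(q, l, S)], T) (fst (ent G p) @ [(q, l, S)], T)"
      by (simp add: eeq_def teq_refl)
    then show ?thesis by (rule eeq_trans[OF eeq_trans[OF eeq_sym[OF e2[of p]] h(4)]])
  qed
  moreover have "\<forall>r. r \<noteq> p \<longrightarrow> eeq (ent G' r) (ent G r)"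
  proof (intro allI impI)
    fix r assume "r \<noteq> p"
    then have hr: "eeq (ent G1' r) (ent G1 r)" using h(5) by blast
    show "eeq (ent G' r) (ent G r)"
      by (rule eeq_trans[OF eeq_trans[OF eeq_sym[OF e2[of r]] hr] eeq_sym[OF e1[of r]]])
  qed
  ultimately show ?case using h by blast
qed simp

lemma red_rcv_inv: "red G a G' \<Longrightarrow> a = ARcv q p l \<Longrightarrow> p \<noteq> q \<and>
  (\<exists>S' \<sigma> m S T. qeq (fst (ent G p)) ((q, l, S') # \<sigma>) \<and> teq (snd (ent G q)) (Bra p m)
   \<and> session_type (Bra p m) \<and> fmlookup m l = Some (S, T) \<and> subsort S' S
   \<and> eeq (ent G' p) (\<sigma>, snd (ent G p)) \<and> eeq (ent G' q) (fst (ent G q), T)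
   \<and> (\<forall>r. r \<noteq> p \<longrightarrow> r \<noteq> q \<longrightarrow> eeq (ent G' r) (ent G r)))"
proof (induction arbitrary: p q l rule: red.induct)
  case (e_rcv G p' q' l' S' \<sigma> Tp \<sigma>q m S T)
  then have eqs: "p' = p" "q' = q" "l' = l" by auto
  have en: "ent G p = ((q, l, S') # \<sigma>, Tp)" "ent G q = (\<sigma>q, Bra p m)" using e_rcv eqs by (simp_all add: ent_def)
  have "fmlookup G q = Some (\<sigma>q, Bra p m)" using e_rcv eqs by simp
  then have wf: "session_type (Bra p m)" using e_rcv(1) wf_env_iff by (metis snd_conv)
  show ?case
    apply (rule conjI)
    using e_rcv eqs apply simp
    apply (rule exI[of _ S'], rule exI[of _ \<sigma>], rule exI[of _ m], rule exI[of _ S], rule exI[of _ T])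
    using e_rcv eqs en wf by (simp add: ent_upd eeq_refl teq_refl qeq_refl)
next
  case (e_struct G G' G1 a G1')
  from e_struct.IH[OF e_struct.prems] obtain S' \<sigma> m S T where
    h: "p \<noteq> q" "qeq (fst (ent G1 p)) ((q, l, S') # \<sigma>)" "teq (snd (ent G1 q)) (Bra p m)"
     "session_type (Bra p m)" "fmlookup m l = Some (S, T)" "subsort S' S"
     "eeq (ent G1' p) (\<sigma>, snd (ent G1 p))" "eeq (ent G1' q) (fst (ent G1 q), T)"
     "\<forall>r. r \<noteq> p \<longrightarrow> r \<noteq> q \<longrightarrow> eeq (ent G1' r) (ent G1 r)"
    by blast
  have e1: "\<And>r. eeq (ent G r) (ent G1 r)" and e2: "\<And>r. eeq (ent G1' r) (ent G' r)"
    using \<open>envequiv G G1\<close> \<open>envequiv G1' G'\<close> by (simp_all add: envequiv_ent)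
  have "qeq (fst (ent G p)) ((q, l, S') # \<sigma>)" using e1[of p] h(2) by (metis eeq_def qeq_trans)
  moreover have "teq (snd (ent G q)) (Bra p m)" using e1[of q] h(3) by (metis eeq_def teq_trans)
  moreover have "eeq (ent G' p) (\<sigma>, snd (ent G p))"
  proof -
    have "teq (snd (ent G1 p)) (snd (ent G p))" using e1[of p] by (metis eeq_def teq_sym)
    then have "eeq (\<sigma>, snd (ent G1 p)) (\<sigma>, snd (ent G p))"
      by (simp add: eeq_def qeq_refl)
    then show ?thesis by (rule eeq_trans[OF eeq_trans[OF eeq_sym[OF e2[of p]] h(7)]])
  qed
  moreover have "eeq (ent G' q) (fst (ent G q), T)"
  proof -
    have "qeq (fst (ent G1 q)) (fst (ent G q))" using e1[of q] by (metis eeq_def qeq_sym)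
    then have "eeq (fst (ent G1 q), T) (fst (ent G q), T)"
      by (simp add: eeq_def teq_refl)
    then show ?thesis by (rule eeq_trans[OF eeq_trans[OF eeq_sym[OF e2[of q]] h(8)]])
  qed
  moreover have "\<forall>r. r \<noteq> p \<longrightarrow> r \<noteq> q \<longrightarrow> eeq (ent G' r) (ent G r)"
  proof (intro allI impI)
    fix r assume "r \<noteq> p" "r \<noteq> q"
    then have hr: "eeq (ent G1' r) (ent G1 r)" using h(9) by blast
    show "eeq (ent G' r) (ent G r)"
      by (rule eeq_trans[OF eeq_trans[OF eeq_sym[OF e2[of r]] hr] eeq_sym[OF e1[of r]]])
  qed
  ultimately show ?case using h by blast
qed simp



lemma eeq_teq: "eeq a b \<Longrightarrow> teq (snd a) (snd b)" by (simp add: eeq_def)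
lemma eeq_qeq: "eeq a b \<Longrightarrow> qeq (fst a) (fst b)" by (simp add: eeq_def)

definition SendEn :: "('p,'l) env \<Rightarrow> 'p \<Rightarrow> 'p \<Rightarrow> 'l \<Rightarrow> bool" where
  "SendEn G p q l \<longleftrightarrow> (\<exists>m S T. teq (snd (ent G p)) (Sel q m) \<and> session_type (Sel q m) \<and> fmlookup m l = Some (S, T))"

definition RcvEn :: "('p,'l) env \<Rightarrow> 'p \<Rightarrow> 'p \<Rightarrow> 'l \<Rightarrow> bool" where
  "RcvEn G p q l \<longleftrightarrow> p \<noteq> q \<and> (\<exists>S' rest m S T. filter (\<lambda>x. fst x = p) (fst (ent G q)) = (p, l, S') # rest
     \<and> teq (snd (ent G p)) (Bra q m) \<and> session_type (Bra q m) \<and> fmlookup m l = Some (S, T) \<and> subsort S' S)"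

lemma send_en: "red G (ASnd p q l) G'' \<Longrightarrow> SendEn G p q l"
  using red_send_inv[of G "ASnd p q l" G'' p q l] unfolding SendEn_def by blast

lemma rcv_en: "red G (ARcv p q l) G'' \<Longrightarrow> RcvEn G p q l"
proof -
  assume r: "red G (ARcv p q l) G''"
  from red_rcv_inv[OF r, of p q l] obtain S' \<sigma> m S T where
    h: "q \<noteq> p" "qeq (fst (ent G q)) ((p, l, S') # \<sigma>)" "teq (snd (ent G p)) (Bra q m)"
      "session_type (Bra q m)" "fmlookup m l = Some (S, T)" "subsort S' S" by blast
  have "filter (\<lambda>x. fst x = p) (fst (ent G q)) = (p, l, S') # filter (\<lambda>x. fst x = p) \<sigma>"
    using qeq_filter[OF h(2), of p] by simp
  then show ?thesis unfolding RcvEn_def using h by blast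
qed

lemma send_en_red: "wf_env G \<Longrightarrow> SendEn G p q l \<Longrightarrow> \<exists>G''. red G (ASnd p q l) G''"
proof -
  assume wf: "wf_env G" and "SendEn G p q l"
  then obtain m S T where h: "teq (snd (ent G p)) (Sel q m)" "session_type (Sel q m)" "fmlookup m l = Some (S, T)"
    unfolding SendEn_def by blast
  obtain \<sigma> T0 where en: "ent G p = (\<sigma>, T0)" by (cases "ent G p")
  define G1 where "G1 = fmupd p (\<sigma>, Sel q m) G"
  have wf1: "wf_env G1" unfolding G1_def using wf h(2) by (rule wf_env_upd)
  have r1: "red G1 (ASnd p q l) (fmupd p (\<sigma> @ [(q, l, S)], T) G1)"
    by (rule e_send[OF wf1 _ h(3)]) (simp add: G1_def)
  have wf2: "wf_env (fmupd p (\<sigma> @ [(q, l, S)], T) G1)" using red_wf[OF r1] by simp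
  have eq1: "envequiv G G1" unfolding envequiv_ent
  proof
    fix r show "eeq (ent G r) (ent G1 r)"
      using h(1) en by (auto simp: G1_def ent_upd eeq_refl eeq_def qeq_refl teq_refl)
  qed
  have eq2: "envequiv (fmupd p (\<sigma> @ [(q, l, S)], T) G1) (fmupd p (\<sigma> @ [(q, l, S)], T) G1)"
    by (simp add: envequiv_ent eeq_refl)
  show ?thesis using e_struct[OF wf wf2 eq1 r1 eq2] by blast
qed

lemma rcv_en_red: "wf_env G \<Longrightarrow> RcvEn G p q l \<Longrightarrow> \<exists>G''. red G (ARcv p q l) G''"
proof -
  assume wf: "wf_env G" and "RcvEn G p q l"
  then obtain S' rest m S T where h: "p \<noteq> q" "filter (\<lambda>x. fst x = p) (fst (ent G q)) = (p, l, S') # rest"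
    "teq (snd (ent G p)) (Bra q m)" "session_type (Bra q m)" "fmlookup m l = Some (S, T)" "subsort S' S"
    unfolding RcvEn_def by blast
  obtain \<sigma>q Tq where enq: "ent G q = (\<sigma>q, Tq)" by (cases "ent G q")
  obtain \<sigma>p Tp where enp: "ent G p = (\<sigma>p, Tp)" by (cases "ent G p")
  from h(2) enq obtain us vs where uv: "\<sigma>q = us @ (p, l, S') # vs" "\<forall>u\<in>set us. fst u \<noteq> p"
    by (auto simp: filter_eq_Cons_iff)
  have mv: "qeq \<sigma>q ((p, l, S') # us @ vs)" using qeq_move[of us "(p, l, S')" vs] uv by simp
  define G1 where "G1 = fmupd q ((p, l, S') # us @ vs, Tq) (fmupd p (\<sigma>p, Bra q m) G)"
  have "session_type Tq" using wf_env_ent[OF wf, of q] enq by simp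
  then have wf1: "wf_env G1" unfolding G1_def using wf h(4) by (intro wf_env_upd)
  have r1: "red G1 (ARcv p q l) (fmupd p (\<sigma>p, T) (fmupd q (us @ vs, Tq) G1))"
    by (rule e_rcv[OF wf1 _ _ _ h(5) h(6)]) (use h(1) in \<open>simp_all add: G1_def\<close>)
  define G2 where "G2 = fmupd p (\<sigma>p, T) (fmupd q (us @ vs, Tq) G1)"
  have wf2: "wf_env G2" using red_wf[OF r1] by (simp add: G2_def)
  have eq1: "envequiv G G1" unfolding envequiv_ent
  proof
    fix r show "eeq (ent G r) (ent G1 r)"
      using h(1,3) enp enq mv by (auto simp: G1_def ent_upd eeq_refl eeq_def qeq_refl teq_refl)
  qed
  have eq2: "envequiv G2 G2" by (simp add: envequiv_ent eeq_refl)
  show ?thesis using e_struct[OF wf wf2 eq1 r1[folded G2_def] eq2] by blast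
qed



lemma send_persist:
  assumes r: "red G a G'" and en: "SendEn G p q l" and na: "\<forall>l'. a \<noteq> ASnd p q l'"
  shows "SendEn G' p q l"
proof -
  from en obtain m S T where h: "teq (snd (ent G p)) (Sel q m)" "session_type (Sel q m)" "fmlookup m l = Some (S, T)"
    unfolding SendEn_def by blast
  have keep: "SendEn G' p q l" if "teq (snd (ent G' p)) (snd (ent G p))"
    unfolding SendEn_def using that h teq_trans by blast
  show ?thesis
  proof (cases a)
    case (ASnd s r' l')
    from red_send_inv[OF r ASnd] obtain m' S0 T0 where
      i: "teq (snd (ent G s)) (Sel r' m')" "\<forall>x. x \<noteq> s \<longrightarrow> eeq (ent G' x) (ent G x)" by blast
    show ?thesis
    proof (cases "s = p")
      case True
      then have "r' = q" using teq_Sel_Sel[OF h(1)] i(1) True by blast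
      then show ?thesis using na ASnd True by simp
    next
      case False
      then show ?thesis using i(2) keep eeq_teq by metis
    qed
  next
    case (ARcv r' s l')
    from red_rcv_inv[OF r ARcv] obtain S' \<sigma> m' S1 T1 where
      i: "teq (snd (ent G r')) (Bra s m')" "eeq (ent G' s) (\<sigma>, snd (ent G s))"
         "\<forall>x. x \<noteq> s \<longrightarrow> x \<noteq> r' \<longrightarrow> eeq (ent G' x) (ent G x)" by blast
    show ?thesis
    proof (cases "r' = p")
      case True
      then show ?thesis using teq_Sel_Bra[OF h(1)] i(1) by blast
    next
      case False
      show ?thesis
      proof (cases "s = p")
        case True
        then show ?thesis using keep eeq_teq[OF i(2)] by simp
      next
        case False2: False
        then show ?thesis using False False2 i(3) keep eeq_teq by metis
      qed
    qed
  qed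
qed

lemma rcv_persist:
  assumes r: "red G a G'" and en: "RcvEn G p q l" and na: "a \<noteq> ARcv p q l"
  shows "RcvEn G' p q l"
proof -
  let ?F = "filter (\<lambda>x. fst x = p)"
  from en obtain S' rest m S T where h: "p \<noteq> q" "?F (fst (ent G q)) = (p, l, S') # rest"
    "teq (snd (ent G p)) (Bra q m)" "session_type (Bra q m)" "fmlookup m l = Some (S, T)" "subsort S' S"
    unfolding RcvEn_def by blast
  have keep: "RcvEn G' p q l" if "teq (snd (ent G' p)) (snd (ent G p))" and "\<exists>rest'. ?F (fst (ent G' q)) = (p, l, S') # rest'"
    unfolding RcvEn_def using that h teq_trans by blast
  show ?thesis
  proof (cases a)
    case (ASnd s r' l')
    from red_send_inv[OF r ASnd] obtain m' S0 T0 where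
      i: "teq (snd (ent G s)) (Sel r' m')" "eeq (ent G' s) (fst (ent G s) @ [(r', l', S0)], T0)"
         "\<forall>x. x \<noteq> s \<longrightarrow> eeq (ent G' x) (ent G x)" by blast
    have sp: "s \<noteq> p"
    proof
      assume "s = p"
      then show False using teq_Sel_Bra[OF i(1)] h(3) by blast
    qed
    have t: "teq (snd (ent G' p)) (snd (ent G p))" using i(3) sp eeq_teq by metis
    have "\<exists>rest'. ?F (fst (ent G' q)) = (p, l, S') # rest'"
    proof (cases "s = q")
      case True
      have "?F (fst (ent G' q)) = ?F (fst (ent G q) @ [(r', l', S0)])"
        using qeq_filter[OF eeq_qeq[OF i(2)]] True by simp
      then show ?thesis using h(2) by simp
    next
      case False
      then show ?thesis using h(2) qeq_filter[OF eeq_qeq] i(3) by metis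
    qed
    then show ?thesis using keep t by blast
  next
    case (ARcv r' s l')
    from red_rcv_inv[OF r ARcv] obtain S'' \<sigma> m' S1 T1 where
      i: "s \<noteq> r'" "qeq (fst (ent G s)) ((r', l', S'') # \<sigma>)" "teq (snd (ent G r')) (Bra s m')"
         "eeq (ent G' s) (\<sigma>, snd (ent G s))" "eeq (ent G' r') (fst (ent G r'), T1)"
         "\<forall>x. x \<noteq> s \<longrightarrow> x \<noteq> r' \<longrightarrow> eeq (ent G' x) (ent G x)" by blast
    show ?thesis
    proof (cases "r' = p")
      case True
      then have "s = q" using teq_Bra_Bra[OF i(3)] h(3) by blast
      then have "?F (fst (ent G q)) = (p, l', S'') # ?F \<sigma>" using qeq_filter[OF i(2), of p] True by simp
      then have "l' = l" using h(2) by simp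
      then show ?thesis using na ARcv True \<open>s = q\<close> by simp
    next
      case False
      have t: "teq (snd (ent G' p)) (snd (ent G p))"
      proof (cases "s = p")
        case True then show ?thesis using eeq_teq[OF i(4)] by simp
      next
        case False2: False then show ?thesis using False False2 i(6) eeq_teq by metis
      qed
      have "\<exists>rest'. ?F (fst (ent G' q)) = (p, l, S') # rest'"
      proof (cases "s = q")
        case True
        have "?F (fst (ent G' q)) = ?F \<sigma>" using qeq_filter[OF eeq_qeq[OF i(4)]] True by simp
        moreover have "?F (fst (ent G q)) = ?F \<sigma>" using qeq_filter[OF i(2), of p] True False by simp
        ultimately show ?thesis using h(2) by metis
      next
        case Fq: False
        show ?thesis
        proof (cases "r' = q")
          case True
          then show ?thesis using qeq_filter[OF eeq_qeq[OF i(5)]] h(2) by simp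
        next
          case False
          then show ?thesis using Fq h(2) qeq_filter[OF eeq_qeq] i(6) by metis
        qed
      qed
      then show ?thesis using keep t by blast
    qed
  qed
qed



lemma es: "enat (Suc i) < eSuc n \<longleftrightarrow> enat i < n"
  by (metis eSuc_enat eSuc_mono)

theorem proposition4p6:
  fixes G G' :: "('p, 'l) env"
  assumes "live G"
    and "red_any G G'"
  shows "live G'"
  unfolding live_def
proof (intro allI impI)
  fix Gs n
  assume path: "is_path Gs n" and g0: "Gs 0 = G'" and fair: "fair_path Gs n"
  from assms(2) obtain a where r0: "red G a G'" unfolding red_any_def by blast
  have wf': "wf_env G'" using red_wf[OF r0] by simp
  have n0: "enat 0 < n" using path unfolding is_path_def by (simp add: zero_enat_def[symmetric] gr_zeroI)
  define Hs where "Hs i = (case i of 0 \<Rightarrow> G | Suc j \<Rightarrow> Gs j)" for i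
  have H0: "Hs 0 = G" and HS: "\<And>j. Hs (Suc j) = Gs j" by (simp_all add: Hs_def)
  have fs: "\<And>i p q l G''. enat i < n \<Longrightarrow> red (Gs i) (ASnd p q l) G'' \<Longrightarrow>
        \<exists>k\<ge>i. enat (Suc k) < n \<and> (\<exists>l'. red (Gs k) (ASnd p q l') (Gs (Suc k)))"
    using fair unfolding fair_path_def by blast
  have fr: "\<And>i p q l G''. enat i < n \<Longrightarrow> red (Gs i) (ARcv p q l) G'' \<Longrightarrow>
        \<exists>k\<ge>i. enat (Suc k) < n \<and> red (Gs k) (ARcv p q l) (Gs (Suc k))"
    using fair unfolding fair_path_def by blast
  have hpath: "is_path Hs (eSuc n)"
    unfolding is_path_def
  proof (intro conjI allI impI)
    show "eSuc n \<noteq> 0" by simp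
  next
    fix i assume i: "enat (Suc i) < eSuc n"
    show "red_any (Hs i) (Hs (Suc i))"
    proof (cases i)
      case 0 then show ?thesis using r0 g0 H0 HS unfolding red_any_def by auto
    next
      case (Suc j)
      then have "enat (Suc j) < n" using i es by simp
      then show ?thesis using path Suc HS unfolding is_path_def by simp
    qed
  qed
  have shiftS: "\<exists>k\<ge>i. enat (Suc k) < eSuc n \<and> (\<exists>l'. red (Hs k) (ASnd p q l') (Hs (Suc k)))"
    if "\<exists>k\<ge>j. enat (Suc k) < n \<and> (\<exists>l'. red (Gs k) (ASnd p q l') (Gs (Suc k)))" "i \<le> Suc j" for i j p q
  proof -
    from that obtain k l' where "k \<ge> j" "enat (Suc k) < n" "red (Gs k) (ASnd p q l') (Gs (Suc k))" by blast
    then show ?thesis using that(2) es HS by (intro exI[of _ "Suc k"]) auto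
  qed
  have shiftR: "\<exists>k\<ge>i. enat (Suc k) < eSuc n \<and> red (Hs k) (ARcv p q l) (Hs (Suc k))"
    if "\<exists>k\<ge>j. enat (Suc k) < n \<and> red (Gs k) (ARcv p q l) (Gs (Suc k))" "i \<le> Suc j" for i j p q l
  proof -
    from that obtain k where "k \<ge> j" "enat (Suc k) < n" "red (Gs k) (ARcv p q l) (Gs (Suc k))" by blast
    then show ?thesis using that(2) es HS by (intro exI[of _ "Suc k"]) auto
  qed
  have one: "enat (Suc 0) < eSuc n" using n0 es by simp
  have hfair: "fair_path Hs (eSuc n)"
    unfolding fair_path_def
  proof (intro allI impI conjI)
    fix i p q l G'' assume i: "enat i < eSuc n" and r: "red (Hs i) (ASnd p q l) G''"
    show "\<exists>k\<ge>i. enat (Suc k) < eSuc n \<and> (\<exists>l'. red (Hs k) (ASnd p q l') (Hs (Suc k)))"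
    proof (cases i)
      case 0
      show ?thesis
      proof (cases "\<exists>l'. a = ASnd p q l'")
        case True
        then obtain l' where "a = ASnd p q l'" by blast
        then show ?thesis using r0 0 H0 HS g0 one by (intro exI[of _ 0]) auto
      next
        case False
        have "SendEn G' p q l" using send_persist[OF r0 send_en] r 0 H0 False by auto
        then obtain G3 where "red (Gs 0) (ASnd p q l) G3" using send_en_red[OF wf'] g0 by blast
        then have "\<exists>k\<ge>0. enat (Suc k) < n \<and> (\<exists>l'. red (Gs k) (ASnd p q l') (Gs (Suc k)))"
          using fs[OF n0] by blast
        from shiftS[OF this, of i] 0 show ?thesis by simp
      qed
    next
      case (Suc j)
      then have "enat j < n" using i es by simp
      then show ?thesis using fs r Suc HS shiftS[of j _ _ i] by auto
    qed
  next
    fix i p q l G'' assume i: "enat i < eSuc n" and r: "red (Hs i) (ARcv p q l) G''"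
    show "\<exists>k\<ge>i. enat (Suc k) < eSuc n \<and> red (Hs k) (ARcv p q l) (Hs (Suc k))"
    proof (cases i)
      case 0
      show ?thesis
      proof (cases "a = ARcv p q l")
        case True
        then show ?thesis using r0 0 H0 HS g0 one by (intro exI[of _ 0]) auto
      next
        case False
        have "RcvEn G' p q l" using rcv_persist[OF r0 rcv_en] r 0 H0 False by auto
        then obtain G3 where "red (Gs 0) (ARcv p q l) G3" using rcv_en_red[OF wf'] g0 by blast
        then have "\<exists>k\<ge>0. enat (Suc k) < n \<and> red (Gs k) (ARcv p q l) (Gs (Suc k))"
          using fr[OF n0] by blast
        from shiftR[OF this, of i] 0 show ?thesis by simp
      qed
    next
      case (Suc j)
      then have "enat j < n" using i es by simp
      then show ?thesis using fr r Suc HS shiftR[of j _ _ _ i] by auto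
    qed
  qed
  have hl: "live_path Hs (eSuc n)" using assms(1) hpath H0 hfair unfolding live_def by blast
  show "live_path Gs n"
    unfolding live_path_def
  proof (intro allI impI conjI)
    fix i p q l S \<sigma> T e
    assume i: "enat i < n" and e: "fmlookup (Gs i) p = Some e" and ee: "eeq e ((q, l, S) # \<sigma>, T)"
    have "enat (Suc i) < eSuc n" using i es by simp
    then obtain k where k: "k \<ge> Suc i" "enat (Suc k) < eSuc n" "red (Hs k) (ARcv q p l) (Hs (Suc k))"
      using hl e ee HS unfolding live_path_def by metis
    then obtain k' where "k = Suc k'" by (cases k) auto
    then show "\<exists>k\<ge>i. enat (Suc k) < n \<and> red (Gs k) (ARcv q p l) (Gs (Suc k))"
      using k es HS by (intro exI[of _ k']) auto
  next
    fix i p q \<sigma> m e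
    assume i: "enat i < n" and e: "fmlookup (Gs i) p = Some e" and ee: "eeq e (\<sigma>, Bra q m)" and d: "fmdom' m \<noteq> {}"
    have "enat (Suc i) < eSuc n" using i es by simp
    then obtain k l' where k: "k \<ge> Suc i" "enat (Suc k) < eSuc n" "red (Hs k) (ARcv p q l') (Hs (Suc k))"
      using hl e ee d HS unfolding live_path_def by metis
    then obtain k' where "k = Suc k'" by (cases k) auto
    then show "\<exists>k\<ge>i. enat (Suc k) < n \<and> (\<exists>l'. red (Gs k) (ARcv p q l') (Gs (Suc k)))"
      using k es HS by (intro exI[of _ k']) auto
  qed
qed

end
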